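(* Let $d,m,r,n$ be positive integers, $\sigma,\tau_s,\tau_g>0$, $\phi,\psi:\mathbb{R}\to\mathbb{R}$ measurable with finite second moments under Gaussian inputs, and let $W_i\in\mathbb{R}^{m\times d}$, $W_g,W_u\in\mathbb{R}^{r\times d}$, $W_o\in\mathbb{R}^{d\times m}$, $\widetilde W_o\in\mathbb{R}^{d\times r}$ be independent random matrices with i.i.d. entries distributed $\mathcal{N}(0,\sigma^2)$ (for $W_i,W_g,W_u$), $\mathcal{N}(0,\tau_s^2)$ (for $W_o$), $\mathcal{N}(0,\tau_g^2)$ (for $\widetilde W_o$). Let $F_{\mathrm{single}}(x)=W_o\phi(W_ix)$ and $F_{\mathrm{gate}}(x)=\widetilde W_o[\psi(W_gx)\odot W_ux]$, and for $H\in\mathbb{R}^{n\times d}$ let $F(H)$ denote $F$ applied to each row of $H$. Fix a deterministic $H\in\mathbb{R}^{n\times d}$ all of whose rows have the same Euclidean norm $c$, put $\nu=\sigma^2c^2$, $G_\nu\sim\mathcal{N}(0,\nu)$, and $\rho_0=\frac{\tau_g^2}{\tau_s^2}\frac{r}{m}\frac{\nu\mathbb{E}\psi(G_\nu)^2}{\mathbb{E}\phi(G_\nu)^2}$ (assuming $\mathbb{E}\phi(G_\nu)^2>0$). Let $P_{\mathrm{out}}$ be an orthogonal projector on $\mathbb{R}^d$ (acting on rows), $H^+_{\mathrm{single}}=H+F_{\mathrm{single}}(H)$, $H^+_{\mathrm{gate}}=H+F_{\mathrm{gate}}(H)$, and $A=\mathbb{E}\|P_{\mathrm{out}}F_{\mathrm{single}}(H)\|_F^2$.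 Then $\mathbb{E}\langle P_{\mathrm{out}}H,P_{\mathrm{out}}F(H)\rangle=0$ for $F\in\{F_{\mathrm{single}},F_{\mathrm{gate}}\}$, $$\mathbb{E}\|P_{\mathrm{out}}H^+_{\mathrm{single}}\|_F^2=\|P_{\mathrm{out}}H\|_F^2+A,\qquad \mathbb{E}\|P_{\mathrm{out}}H^+_{\mathrm{gate}}\|_F^2=\|P_{\mathrm{out}}H\|_F^2+\rho_0A,$$ and therefore $\mathbb{E}\|P_{\mathrm{out}}H^+_{\mathrm{gate}}\|_F^2=\bar\rho\,\mathbb{E}\|P_{\mathrm{out}}H^+_{\mathrm{single}}\|_F^2$ with $$\bar\rho=\frac{\|P_{\mathrm{out}}H\|_F^2+\rho_0A}{\|P_{\mathrm{out}}H\|_F^2+A},$$ where $\bar\rho<1$ whenever $A>0$ and $\rho_0<1$.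
   Context: Here $P_{\mathrm{out}}H$ means $HP_{\mathrm{out}}$ (projection of each row), $\langle\cdot,\cdot\rangle$ is the Frobenius inner product, and expectations are over the random weights. This models a residual feed-forward sublayer $H^+=H+F(H)$ at initialization with a single-branch versus a multiplicative gated FFN. *)

theory Defs
  imports "HOL-Probability.Probability"
begin

definition gauss :: "real \<Rightarrow> real measure" where
  "gauss v = (if v = 0 then return lborel 0 else density lborel (normal_density 0 (sqrt v)))"

definition gauss_mat :: "nat \<Rightarrow> nat \<Rightarrow> real \<Rightarrow> (nat \<times> nat \<Rightarrow> real) measure" where
  "gauss_mat nr nc s = PiM ({..<nr} \<times> {..<nc}) (\<lambda>_. density lborel (normal_density 0 s))"

type_synonym rmat = "nat \<times> nat \<Rightarrow> real"

text \<open>Joint law of the independent weights (W_i, W_g, W_u, W_o, W_o~).\<close>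
definition weights :: "nat \<Rightarrow> nat \<Rightarrow> nat \<Rightarrow> real \<Rightarrow> real \<Rightarrow> real \<Rightarrow>
    (rmat \<times> rmat \<times> rmat \<times> rmat \<times> rmat) measure" where
  "weights d m r \<sigma> \<tau>s \<tau>g =
     gauss_mat m d \<sigma> \<Otimes>\<^sub>M (gauss_mat r d \<sigma> \<Otimes>\<^sub>M (gauss_mat r d \<sigma> \<Otimes>\<^sub>M
       (gauss_mat d m \<tau>s \<Otimes>\<^sub>M gauss_mat d r \<tau>g)))"

text \<open>Matrices H in R^(n x d) are functions nat => nat => real, H k l = entry (row k, col l).\<close>

definition F_single :: "nat \<Rightarrow> nat \<Rightarrow> (real \<Rightarrow> real) \<Rightarrow> rmat \<Rightarrow> rmat \<Rightarrow>
    (nat \<Rightarrow> nat \<Rightarrow> real) \<Rightarrow> nat \<Rightarrow> nat \<Rightarrow> real" where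
  "F_single d m \<phi> Wi Wo H k a = (\<Sum>j<m. Wo (a, j) * \<phi> (\<Sum>l<d. Wi (j, l) * H k l))"

definition F_gate :: "nat \<Rightarrow> nat \<Rightarrow> (real \<Rightarrow> real) \<Rightarrow> rmat \<Rightarrow> rmat \<Rightarrow> rmat \<Rightarrow>
    (nat \<Rightarrow> nat \<Rightarrow> real) \<Rightarrow> nat \<Rightarrow> nat \<Rightarrow> real" where
  "F_gate d r \<psi> Wg Wu Wot H k a =
     (\<Sum>j<r. Wot (a, j) * (\<psi> (\<Sum>l<d. Wg (j, l) * H k l) * (\<Sum>l<d. Wu (j, l) * H k l)))"

definition proj_rows :: "nat \<Rightarrow> (nat \<Rightarrow> nat \<Rightarrow> real) \<Rightarrow> (nat \<Rightarrow> nat \<Rightarrow> real) \<Rightarrow> nat \<Rightarrow> nat \<Rightarrow> real" where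
  "proj_rows d P X k a = (\<Sum>l<d. X k l * P l a)"

definition frob_inner :: "nat \<Rightarrow> nat \<Rightarrow> (nat \<Rightarrow> nat \<Rightarrow> real) \<Rightarrow> (nat \<Rightarrow> nat \<Rightarrow> real) \<Rightarrow> real" where
  "frob_inner n d X Y = (\<Sum>k<n. \<Sum>a<d. X k a * Y k a)"

definition frob_sq :: "nat \<Rightarrow> nat \<Rightarrow> (nat \<Rightarrow> nat \<Rightarrow> real) \<Rightarrow> real" where
  "frob_sq n d X = (\<Sum>k<n. \<Sum>a<d. (X k a)\<^sup>2)"

definition orth_projector :: "nat \<Rightarrow> (nat \<Rightarrow> nat \<Rightarrow> real) \<Rightarrow> bool" where
  "orth_projector d P \<longleftrightarrow>
     (\<forall>i<d. \<forall>j<d. P i j = P j i) \<and> (\<forall>i<d. \<forall>j<d. (\<Sum>k<d. P i k * P k j) = P i j)"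

end

theory Submission
  imports Defs
begin

abbreviation nd :: "real \<Rightarrow> real measure" where
  "nd s \<equiv> density lborel (\<lambda>x. ennreal (normal_density 0 s x))"

lemma nd_mom1:
  assumes "0 < s"
  shows "integrable (nd s) (\<lambda>x. x)" "(\<integral>x. x \<partial>nd s) = 0"
proof -
  show "integrable (nd s) (\<lambda>x. x)"
    by (subst integrable_density) (auto simp: integrable_normal_moment_nz_1 assms)
  have "(\<integral>x. x \<partial>nd s) = (\<integral>x. normal_density 0 s x * x \<partial>lborel)"
    by (subst integral_density) auto
  also have "\<dots> = 0" using assms by (rule integral_normal_moment_nz_1)
  finally show "(\<integral>x. x \<partial>nd s) = 0" .
qed

lemma nd_mom2:
  assumes "0 < s"
  shows "integrable (nd s) (\<lambda>x. x\<^sup>2)" "(\<integral>x. x\<^sup>2 \<partial>nd s) = s\<^sup>2"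
proof -
  show "integrable (nd s) (\<lambda>x. x\<^sup>2)"
    using integrable_normal_moment[of s 0 2] assms
    by (subst integrable_density) auto
  have "(\<integral>x. x\<^sup>2 \<partial>nd s) = (\<integral>x. normal_density 0 s x * (x - 0)^(2*1) \<partial>lborel)"
    by (subst integral_density) auto
  also have "\<dots> = s\<^sup>2" using assms
    by (subst integral_normal_moment_even) (auto simp: power2_eq_square)
  finally show "(\<integral>x. x\<^sup>2 \<partial>nd s) = s\<^sup>2" .
qed

lemma gauss_mat_eq: "gauss_mat nr nc s = PiM ({..<nr} \<times> {..<nc}) (\<lambda>_. nd s)"
  by (simp add: gauss_mat_def)

lemma prob_gauss_mat: "0 < s \<Longrightarrow> prob_space (gauss_mat nr nc s)"
  unfolding gauss_mat_def
  by (intro prob_space_PiM prob_space_normal_density)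

lemma gm_prod:
  fixes f :: "nat \<times> nat \<Rightarrow> real \<Rightarrow> real"
  assumes "0 < s" and "\<And>i. i \<in> {..<nr} \<times> {..<nc} \<Longrightarrow> integrable (nd s) (f i)"
  shows "integrable (gauss_mat nr nc s) (\<lambda>W. \<Prod>i\<in>{..<nr} \<times> {..<nc}. f i (W i))"
    "(\<integral>W. (\<Prod>i\<in>{..<nr} \<times> {..<nc}. f i (W i)) \<partial>gauss_mat nr nc s) =
       (\<Prod>i\<in>{..<nr} \<times> {..<nc}. (\<integral>x. f i x \<partial>nd s))"
proof -
  interpret product_prob_space "\<lambda>_. nd s"
    by (intro product_prob_spaceI prob_space_normal_density assms(1))
  show "integrable (gauss_mat nr nc s) (\<lambda>W. \<Prod>i\<in>{..<nr} \<times> {..<nc}. f i (W i))"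
    unfolding gauss_mat_def using product_integrable_prod[of "{..<nr} \<times> {..<nc}" f] assms by auto
  show "(\<integral>W. (\<Prod>i\<in>{..<nr} \<times> {..<nc}. f i (W i)) \<partial>gauss_mat nr nc s) =
       (\<Prod>i\<in>{..<nr} \<times> {..<nc}. (\<integral>x. f i x \<partial>nd s))"
    unfolding gauss_mat_def using product_integral_prod[of "{..<nr} \<times> {..<nc}" f] assms by auto
qed

lemma nd_const: "0 < s \<Longrightarrow> integrable (nd s) (\<lambda>x. 1::real)" "0 < s \<Longrightarrow> (\<integral>x. 1 \<partial>nd s) = (1::real)"
proof -
  assume "0 < s"
  interpret prob_space "nd s" by (rule prob_space_normal_density) fact
  show "integrable (nd s) (\<lambda>x. 1::real)" by simp
  show "(\<integral>x. 1 \<partial>nd s) = (1::real)" using prob_space by simp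
qed

lemma nd_meas: "0 < s \<Longrightarrow> measure (nd s) UNIV = 1"
  using nd_const(2)[of s] by simp

lemma gm_mom1:
  assumes "p \<in> {..<nr} \<times> {..<nc}" "0 < s"
  shows "integrable (gauss_mat nr nc s) (\<lambda>W. W p)" "(\<integral>W. W p \<partial>gauss_mat nr nc s) = 0"
proof -
  define f where "f = (\<lambda>i x. if i = p then x else (1::real))"
  have eq: "(\<lambda>W. \<Prod>i\<in>{..<nr} \<times> {..<nc}. f i (W i)) = (\<lambda>W. W p)"
    using assms by (auto simp: f_def prod.delta)
  have int: "integrable (nd s) (f i)" for i
    by (cases "i = p") (auto simp: f_def nd_mom1 nd_const assms)
  show "integrable (gauss_mat nr nc s) (\<lambda>W. W p)"
    using gm_prod(1)[of s nr nc f] int eq assms by simp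
  have "(\<integral>W. W p \<partial>gauss_mat nr nc s) = (\<Prod>i\<in>{..<nr} \<times> {..<nc}. (\<integral>x. f i x \<partial>nd s))"
    using gm_prod(2)[of s nr nc f] int eq assms by simp
  also have "\<dots> = 0"
  proof (rule prod_zero)
    show "\<exists>a\<in>{..<nr} \<times> {..<nc}. (\<integral>x. f a x \<partial>nd s) = 0"
      using assms by (intro bexI[of _ p]) (auto simp: f_def nd_mom1)
  qed simp
  finally show "(\<integral>W. W p \<partial>gauss_mat nr nc s) = 0" .
qed

lemma gm_mom2_aux:
  assumes "p \<in> {..<nr} \<times> {..<nc}" "q \<in> {..<nr} \<times> {..<nc}" "0 < s"
  shows "integrable (gauss_mat nr nc s) (\<lambda>W. W p * W q) \<and>
    (\<integral>W. W p * W q \<partial>gauss_mat nr nc s) = (if p = q then s\<^sup>2 else 0)"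
proof (cases "p = q")
  case True
  define f where "f = (\<lambda>i x. if i = p then x\<^sup>2 else (1::real))"
  have eq: "(\<lambda>W. \<Prod>i\<in>{..<nr} \<times> {..<nc}. f i (W i)) = (\<lambda>W. W p * W q)"
    using assms True by (auto simp: f_def prod.delta power2_eq_square)
  have int: "integrable (nd s) (f i)" for i
    by (cases "i = p") (auto simp: f_def nd_mom2 nd_const assms)
  have "(\<integral>W. W p * W q \<partial>gauss_mat nr nc s) = (\<Prod>i\<in>{..<nr} \<times> {..<nc}. (\<integral>x. f i x \<partial>nd s))"
    using gm_prod(2)[of s nr nc f] int eq assms by simp
  also have "\<dots> = (\<Prod>i\<in>{..<nr} \<times> {..<nc}. (if i = p then s\<^sup>2 else 1))"
    by (intro prod.cong) (auto simp: f_def nd_mom2 nd_meas assms)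
  also have "\<dots> = s\<^sup>2" using assms by (simp add: prod.delta)
  finally show ?thesis
    using True gm_prod(1)[of s nr nc f] int eq assms by simp
next
  case False
  define f where "f = (\<lambda>i x. (if i = p then x else (1::real)) * (if i = q then x else 1))"
  have eq: "(\<lambda>W. \<Prod>i\<in>{..<nr} \<times> {..<nc}. f i (W i)) = (\<lambda>W. W p * W q)"
    using assms by (auto simp: f_def prod.distrib prod.delta)
  have int: "integrable (nd s) (f i)" for i
    using False by (cases "i = p"; cases "i = q") (auto simp: f_def nd_mom1 nd_const assms)
  have "(\<integral>W. W p * W q \<partial>gauss_mat nr nc s) = (\<Prod>i\<in>{..<nr} \<times> {..<nc}. (\<integral>x. f i x \<partial>nd s))"
    using gm_prod(2)[of s nr nc f] int eq assms by simp
  also have "\<dots> = 0"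
  proof (rule prod_zero)
    show "\<exists>a\<in>{..<nr} \<times> {..<nc}. (\<integral>x. f a x \<partial>nd s) = 0"
      using assms False by (intro bexI[of _ p]) (auto simp: f_def nd_mom1)
  qed simp
  finally show ?thesis
    using False gm_prod(1)[of s nr nc f] int eq assms by simp
qed

lemma gm_mom2:
  assumes "p \<in> {..<nr} \<times> {..<nc}" "q \<in> {..<nr} \<times> {..<nc}" "0 < s"
  shows "integrable (gauss_mat nr nc s) (\<lambda>W. W p * W q)"
    "(\<integral>W. W p * W q \<partial>gauss_mat nr nc s) = (if p = q then s\<^sup>2 else 0)"
  using gm_mom2_aux[OF assms] by auto

lemma gm_meas_comp:
  assumes "p \<in> {..<nr} \<times> {..<nc}"
  shows "(\<lambda>W. W p) \<in> borel_measurable (gauss_mat nr nc s)"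
proof -
  have "(\<lambda>W. W p) \<in> measurable (PiM ({..<nr} \<times> {..<nc}) (\<lambda>_. nd s)) (nd s)"
    by (rule measurable_component_singleton) (rule assms)
  moreover have "measurable (PiM ({..<nr} \<times> {..<nc}) (\<lambda>_. nd s)) (nd s)
      = measurable (PiM ({..<nr} \<times> {..<nc}) (\<lambda>_. nd s)) borel"
    by (rule measurable_cong_sets) auto
  ultimately show ?thesis unfolding gauss_mat_def by simp
qed

lemma gm_distr_comp:
  assumes "p \<in> {..<nr} \<times> {..<nc}" "0 < s"
  shows "distr (gauss_mat nr nc s) borel (\<lambda>W. W p) = nd s"
proof -
  have "distr (gauss_mat nr nc s) borel (\<lambda>W. W p) = distr (gauss_mat nr nc s) (nd s) (\<lambda>W. W p)"
    by (rule distr_cong) auto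
  also have "\<dots> = nd s"
    unfolding gauss_mat_def
    by (rule distr_PiM_component) (auto intro: prob_space_normal_density assms)
  finally show ?thesis .
qed

lemma gm_indep:
  assumes "0 < s" "{..<nr} \<times> {..<nc} \<noteq> {}"
  shows "prob_space.indep_vars (gauss_mat nr nc s) (\<lambda>_. borel) (\<lambda>p W. W p) ({..<nr} \<times> {..<nc})"
proof -
  interpret prob_space "gauss_mat nr nc s" by (rule prob_gauss_mat) fact
  show ?thesis
  proof (subst indep_vars_iff_distr_eq_PiM')
    show "{..<nr} \<times> {..<nc} \<noteq> {}" by fact
    show "random_variable borel (\<lambda>W. W i)" if "i \<in> {..<nr} \<times> {..<nc}" for i
      using gm_meas_comp[OF that] by simp
    have "distr (gauss_mat nr nc s) (\<Pi>\<^sub>M i\<in>{..<nr} \<times> {..<nc}. borel) (\<lambda>x. \<lambda>i\<in>{..<nr} \<times> {..<nc}. x i)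
        = distr (gauss_mat nr nc s) (gauss_mat nr nc s) (\<lambda>x. x)"
      by (rule distr_cong) (auto simp: gauss_mat_def space_PiM intro!: sets_PiM_cong)
    also have "\<dots> = gauss_mat nr nc s" by simp
    also have "\<dots> = (\<Pi>\<^sub>M i\<in>{..<nr} \<times> {..<nc}. distr (gauss_mat nr nc s) borel (\<lambda>W. W i))"
      unfolding gauss_mat_def[of nr nc s]
      by (intro PiM_cong refl) (simp add: gm_distr_comp[unfolded gauss_mat_def] assms)
    finally show "distr (gauss_mat nr nc s) (\<Pi>\<^sub>M i\<in>{..<nr} \<times> {..<nc}. borel) (\<lambda>x. \<lambda>i\<in>{..<nr} \<times> {..<nc}. x i)
        = (\<Pi>\<^sub>M i\<in>{..<nr} \<times> {..<nc}. distr (gauss_mat nr nc s) borel (\<lambda>W. W i))" .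
  qed
qed

lemma gm_distributed_comp:
  assumes "p \<in> {..<nr} \<times> {..<nc}" "0 < s"
  shows "distributed (gauss_mat nr nc s) lborel (\<lambda>W. W p) (normal_density 0 s)"
  unfolding distributed_def
proof (intro conjI)
  have "distr (gauss_mat nr nc s) lborel (\<lambda>W. W p) = distr (gauss_mat nr nc s) borel (\<lambda>W. W p)"
    by (rule distr_cong) auto
  also have "\<dots> = nd s" by (rule gm_distr_comp[OF assms])
  finally show "distr (gauss_mat nr nc s) lborel (\<lambda>W. W p) = nd s" .
  show "(\<lambda>W. W p) \<in> measurable (gauss_mat nr nc s) lborel"
    using gm_meas_comp[OF assms(1)] by simp
qed simp

lemma gm_lin_distributed:
  assumes "0 < s" "j < nr" "\<exists>l<nc. h l \<noteq> 0"
  shows "distributed (gauss_mat nr nc s) lborel (\<lambda>W. \<Sum>l<nc. W (j, l) * h l)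
           (normal_density 0 (s * sqrt (\<Sum>l<nc. (h l)\<^sup>2)))"
proof -
  interpret prob_space "gauss_mat nr nc s" by (rule prob_gauss_mat) fact
  define S where "S = {l\<in>{..<nc}. h l \<noteq> 0}"
  define J where "J = Pair j ` S"
  have SJ: "S \<noteq> {}" "finite S" using assms(3) by (auto simp: S_def)
  have J: "J \<noteq> {}" "finite J" "J \<subseteq> {..<nr} \<times> {..<nc}"
    using SJ assms(2) by (auto simp: J_def S_def)
  have Ine: "{..<nr} \<times> {..<nc} \<noteq> {}" using J by auto
  have ind0: "indep_vars (\<lambda>_. borel) (\<lambda>p W. W p) J"
    by (rule indep_vars_subset[OF gm_indep[OF assms(1) Ine] J(3)])
  have ind: "indep_vars (\<lambda>_. borel) (\<lambda>p W. h (snd p) * W p) J"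
    by (rule indep_vars_compose2[OF ind0, where Y="\<lambda>p x. h (snd p) * x" and N="\<lambda>_. borel"]) simp
  have dist: "distributed (gauss_mat nr nc s) lborel (\<lambda>W. h (snd p) * W p)
        (normal_density 0 (\<bar>h (snd p)\<bar> * s))" if "p \<in> J" for p
  proof -
    have d0: "distributed (gauss_mat nr nc s) lborel (\<lambda>W. W p) (normal_density 0 s)"
      using gm_distributed_comp[of p nr nc s] that J assms by auto
    have "h (snd p) \<noteq> 0" using that by (auto simp: J_def S_def)
    from normal_density_affine[OF d0 assms(1) this, of 0] show ?thesis by simp
  qed
  have pos: "0 < \<bar>h (snd p)\<bar> * s" if "p \<in> J" for p
    using that assms(1) by (auto simp: J_def S_def)
  have "distributed (gauss_mat nr nc s) lborel (\<lambda>W. \<Sum>p\<in>J. h (snd p) * W p)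
         (normal_density (\<Sum>p\<in>J. 0) (sqrt (\<Sum>p\<in>J. (\<bar>h (snd p)\<bar> * s)\<^sup>2)))"
    by (rule sum_indep_normal[where X="\<lambda>p W. h (snd p) * W p" and \<mu>="\<lambda>_. 0", OF J(2) J(1) ind pos dist])
  moreover have "(\<lambda>W. \<Sum>p\<in>J. h (snd p) * W p) = (\<lambda>W. \<Sum>l<nc. W (j, l) * h l)"
  proof
    fix W :: "nat \<times> nat \<Rightarrow> real"
    have "(\<Sum>p\<in>J. h (snd p) * W p) = (\<Sum>l\<in>S. W (j, l) * h l)"
      unfolding J_def by (subst sum.reindex) (auto simp: inj_on_def mult.commute)
    also have "\<dots> = (\<Sum>l<nc. W (j, l) * h l)"
      by (rule sum.mono_neutral_left) (auto simp: S_def)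
    finally show "(\<Sum>p\<in>J. h (snd p) * W p) = (\<Sum>l<nc. W (j, l) * h l)" .
  qed
  moreover have "sqrt (\<Sum>p\<in>J. (\<bar>h (snd p)\<bar> * s)\<^sup>2) = s * sqrt (\<Sum>l<nc. (h l)\<^sup>2)"
  proof -
    have "(\<Sum>p\<in>J. (\<bar>h (snd p)\<bar> * s)\<^sup>2) = (\<Sum>l\<in>S. s\<^sup>2 * (h l)\<^sup>2)"
      unfolding J_def by (subst sum.reindex) (auto simp: inj_on_def power_mult_distrib mult.commute)
    also have "\<dots> = s\<^sup>2 * (\<Sum>l<nc. (h l)\<^sup>2)"
      by (subst sum_distrib_left[symmetric], rule arg_cong[where f="\<lambda>x. s\<^sup>2 * x"],
          rule sum.mono_neutral_left) (auto simp: S_def)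
    finally show ?thesis using assms(1) by (simp add: real_sqrt_mult)
  qed
  ultimately show ?thesis by (simp only: sum.neutral_const)
qed

lemma gm_lin_gauss_aux:
  fixes g :: "real \<Rightarrow> real"
  assumes "0 < s" "j < nr" "(\<Sum>l<nc. (h l)\<^sup>2) = c\<^sup>2" "0 \<le> c"
    and g: "g \<in> borel_measurable borel" and gi: "integrable (gauss (s\<^sup>2 * c\<^sup>2)) g"
  shows "integrable (gauss_mat nr nc s) (\<lambda>W. g (\<Sum>l<nc. W (j,l) * h l)) \<and>
    (\<integral>W. g (\<Sum>l<nc. W (j,l) * h l) \<partial>gauss_mat nr nc s) = (\<integral>x. g x \<partial>gauss (s\<^sup>2 * c\<^sup>2))"
proof (cases "c = 0")
  case True
  interpret prob_space "gauss_mat nr nc s" by (rule prob_gauss_mat) fact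
  have "\<forall>l\<in>{..<nc}. (h l)\<^sup>2 = 0"
    using assms(3) True by (subst sum_nonneg_eq_0_iff[symmetric]) auto
  then have h0: "(\<Sum>l<nc. W (j,l) * h l) = 0" for W by simp
  have "(\<integral>x. g x \<partial>gauss (s\<^sup>2 * c\<^sup>2)) = g 0"
    using True g integral_return[of 0 lborel g] by (simp add: gauss_def)
  then show ?thesis using h0 prob_space by simp
next
  case False
  then have cpos: "0 < c" using assms(4) by simp
  have ex: "\<exists>l<nc. h l \<noteq> 0"
  proof (rule ccontr)
    assume "\<not> (\<exists>l<nc. h l \<noteq> 0)"
    then have "(\<Sum>l<nc. (h l)\<^sup>2) = 0" by simp
    with assms(3) cpos show False by simp
  qed
  have sq: "s * sqrt (\<Sum>l<nc. (h l)\<^sup>2) = sqrt (s\<^sup>2 * c\<^sup>2)"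
    using assms(1,3,4) by (simp add: real_sqrt_mult)
  have D: "distributed (gauss_mat nr nc s) lborel (\<lambda>W. \<Sum>l<nc. W (j, l) * h l)
           (normal_density 0 (sqrt (s\<^sup>2 * c\<^sup>2)))"
    using gm_lin_distributed[OF assms(1,2) ex] sq by simp
  have dd: "distr (gauss_mat nr nc s) lborel (\<lambda>W. \<Sum>l<nc. W (j, l) * h l) = gauss (s\<^sup>2 * c\<^sup>2)"
    using D cpos assms(1) unfolding distributed_def gauss_def by simp
  have meas: "(\<lambda>W. \<Sum>l<nc. W (j, l) * h l) \<in> measurable (gauss_mat nr nc s) lborel"
    using D unfolding distributed_def by simp
  have g': "g \<in> borel_measurable lborel" using g by simp
  show ?thesis
    using integrable_distr_eq[OF meas g'] integral_distr[OF meas g'] gi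
    unfolding dd by simp
qed

lemma gm_lin_gauss:
  fixes g :: "real \<Rightarrow> real"
  assumes "0 < s" "j < nr" "(\<Sum>l<nc. (h l)\<^sup>2) = c\<^sup>2" "0 \<le> c"
    and g: "g \<in> borel_measurable borel" and gi: "integrable (gauss (s\<^sup>2 * c\<^sup>2)) g"
  shows "integrable (gauss_mat nr nc s) (\<lambda>W. g (\<Sum>l<nc. W (j,l) * h l))"
    "(\<integral>W. g (\<Sum>l<nc. W (j,l) * h l) \<partial>gauss_mat nr nc s) = (\<integral>x. g x \<partial>gauss (s\<^sup>2 * c\<^sup>2))"
  using gm_lin_gauss_aux[OF assms] by auto

lemma gauss_sq:
  assumes "0 \<le> v"
  shows "integrable (gauss v) (\<lambda>x. x\<^sup>2)" "(\<integral>x. x\<^sup>2 \<partial>gauss v) = v"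
proof -
  have "integrable (gauss v) (\<lambda>x. x\<^sup>2) \<and> (\<integral>x. x\<^sup>2 \<partial>gauss v) = v"
  proof (cases "v = 0")
    case True
    then show ?thesis
      by (simp add: gauss_def integral_return integrable_iff_bounded nn_integral_return)
  next
    case False
    then have "0 < sqrt v" using assms by simp
    then show ?thesis using nd_mom2[of "sqrt v"] False assms by (simp add: gauss_def)
  qed
  then show "integrable (gauss v) (\<lambda>x. x\<^sup>2)" "(\<integral>x. x\<^sup>2 \<partial>gauss v) = v" by auto
qed

lemma prod2:
  fixes f :: "'a \<Rightarrow> real" and g :: "'b \<Rightarrow> real"
  assumes P1: "prob_space M1" and P2: "prob_space M2"
    and f: "integrable M1 f" and g: "integrable M2 g"
  shows "integrable (M1 \<Otimes>\<^sub>M M2) (\<lambda>x. f (fst x) * g (snd x))"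
    "(\<integral>x. f (fst x) * g (snd x) \<partial>(M1 \<Otimes>\<^sub>M M2)) = (\<integral>x. f x \<partial>M1) * (\<integral>y. g y \<partial>M2)"
proof -
  interpret M1: prob_space M1 by fact
  interpret M2: prob_space M2 by fact
  interpret P: pair_prob_space M1 M2 by unfold_locales
  have fm[measurable]: "f \<in> borel_measurable M1" using f by auto
  have gm[measurable]: "g \<in> borel_measurable M2" using g by auto
  show I: "integrable (M1 \<Otimes>\<^sub>M M2) (\<lambda>x. f (fst x) * g (snd x))"
  proof (rule P.Fubini_integrable)
    show "(\<lambda>x. f (fst x) * g (snd x)) \<in> borel_measurable (M1 \<Otimes>\<^sub>M M2)" by measurable
    have "(\<lambda>x. \<integral>y. norm (f (fst (x, y)) * g (snd (x, y))) \<partial>M2) = (\<lambda>x. \<bar>f x\<bar> * (\<integral>y. \<bar>g y\<bar> \<partial>M2))"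
      by (simp add: abs_mult)
    then show "integrable M1 (\<lambda>x. \<integral>y. norm (f (fst (x, y)) * g (snd (x, y))) \<partial>M2)"
      using f by simp
    show "AE x in M1. integrable M2 (\<lambda>y. f (fst (x, y)) * g (snd (x, y)))"
      using g by simp
  qed
  have "(\<integral>x. f (fst x) * g (snd x) \<partial>(M1 \<Otimes>\<^sub>M M2)) = (\<integral>x. (\<integral>y. f x * g y \<partial>M2) \<partial>M1)"
    using P.integral_fst'[OF I] by simp
  also have "\<dots> = (\<integral>x. f x * (\<integral>y. g y \<partial>M2) \<partial>M1)" by simp
  also have "\<dots> = (\<integral>x. f x \<partial>M1) * (\<integral>y. g y \<partial>M2)" by simp
  finally show "(\<integral>x. f (fst x) * g (snd x) \<partial>(M1 \<Otimes>\<^sub>M M2)) = (\<integral>x. f x \<partial>M1) * (\<integral>y. g y \<partial>M2)" .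
qed

lemma prod5:
  fixes f1 f2 f3 f4 f5 :: "_ \<Rightarrow> real"
  assumes "prob_space M1" "prob_space M2" "prob_space M3" "prob_space M4" "prob_space M5"
    and "integrable M1 f1" "integrable M2 f2" "integrable M3 f3" "integrable M4 f4" "integrable M5 f5"
  shows "integrable (M1 \<Otimes>\<^sub>M (M2 \<Otimes>\<^sub>M (M3 \<Otimes>\<^sub>M (M4 \<Otimes>\<^sub>M M5))))
     (\<lambda>w. f1 (fst w) * (f2 (fst (snd w)) * (f3 (fst (snd (snd w))) * (f4 (fst (snd (snd (snd w)))) * f5 (snd (snd (snd (snd w))))))))"
   "(\<integral>w. f1 (fst w) * (f2 (fst (snd w)) * (f3 (fst (snd (snd w))) * (f4 (fst (snd (snd (snd w)))) * f5 (snd (snd (snd (snd w))))))) \<partial>(M1 \<Otimes>\<^sub>M (M2 \<Otimes>\<^sub>M (M3 \<Otimes>\<^sub>M (M4 \<Otimes>\<^sub>M M5)))))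
    = (\<integral>x. f1 x \<partial>M1) * ((\<integral>x. f2 x \<partial>M2) * ((\<integral>x. f3 x \<partial>M3) * ((\<integral>x. f4 x \<partial>M4) * (\<integral>x. f5 x \<partial>M5))))"
proof -
  note P45 = prob_space_pair[OF assms(4,5)]
  note P345 = prob_space_pair[OF assms(3) P45]
  note P2345 = prob_space_pair[OF assms(2) P345]
  note I45 = prod2[OF assms(4,5,9,10)]
  note I345 = prod2[OF assms(3) P45 assms(8) I45(1)]
  note I2345 = prod2[OF assms(2) P345 assms(7) I345(1)]
  note I12345 = prod2[OF assms(1) P2345 assms(6) I2345(1)]
  show "integrable (M1 \<Otimes>\<^sub>M (M2 \<Otimes>\<^sub>M (M3 \<Otimes>\<^sub>M (M4 \<Otimes>\<^sub>M M5))))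
     (\<lambda>w. f1 (fst w) * (f2 (fst (snd w)) * (f3 (fst (snd (snd w))) * (f4 (fst (snd (snd (snd w)))) * f5 (snd (snd (snd (snd w))))))))"
    using I12345(1) by simp
  show "(\<integral>w. f1 (fst w) * (f2 (fst (snd w)) * (f3 (fst (snd (snd w))) * (f4 (fst (snd (snd (snd w)))) * f5 (snd (snd (snd (snd w))))))) \<partial>(M1 \<Otimes>\<^sub>M (M2 \<Otimes>\<^sub>M (M3 \<Otimes>\<^sub>M (M4 \<Otimes>\<^sub>M M5)))))
    = (\<integral>x. f1 x \<partial>M1) * ((\<integral>x. f2 x \<partial>M2) * ((\<integral>x. f3 x \<partial>M3) * ((\<integral>x. f4 x \<partial>M4) * (\<integral>x. f5 x \<partial>M5))))"
    using I12345(2) I2345(2) I345(2) I45(2) by simp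
qed

lemma abs_mult_le_sq: "\<bar>a * b\<bar> \<le> a\<^sup>2 + (b::real)\<^sup>2"
proof -
  have "0 \<le> (\<bar>a\<bar> - \<bar>b\<bar>)\<^sup>2" by simp
  then have "2 * \<bar>a\<bar> * \<bar>b\<bar> \<le> \<bar>a\<bar>\<^sup>2 + \<bar>b\<bar>\<^sup>2" by (simp add: power2_diff)
  moreover have "0 \<le> \<bar>a\<bar> * \<bar>b\<bar>" by simp
  ultimately show ?thesis unfolding abs_mult power2_abs by linarith
qed

lemma integrable_prod_sq:
  fixes f g :: "'a \<Rightarrow> real"
  assumes "f \<in> borel_measurable M" "g \<in> borel_measurable M"
    "integrable M (\<lambda>x. (f x)\<^sup>2)" "integrable M (\<lambda>x. (g x)\<^sup>2)"
  shows "integrable M (\<lambda>x. f x * g x)"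
proof (rule Bochner_Integration.integrable_bound[where f="\<lambda>x. (f x)\<^sup>2 + (g x)\<^sup>2"])
  show "integrable M (\<lambda>x. (f x)\<^sup>2 + (g x)\<^sup>2)" using assms by simp
  show "(\<lambda>x. f x * g x) \<in> borel_measurable M" using assms by simp
  show "AE x in M. norm (f x * g x) \<le> norm ((f x)\<^sup>2 + (g x)\<^sup>2)"
  proof (rule AE_I2)
    fix x
    have "\<bar>f x * g x\<bar> \<le> (f x)\<^sup>2 + (g x)\<^sup>2"
      by (rule abs_mult_le_sq)
    moreover have "0 \<le> (f x)\<^sup>2 + (g x)\<^sup>2" by simp
    ultimately show "norm (f x * g x) \<le> norm ((f x)\<^sup>2 + (g x)\<^sup>2)"
      by (simp only: real_norm_def abs_of_nonneg)
  qed
qed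

lemma integrable_of_sq:
  fixes f :: "'a \<Rightarrow> real"
  assumes "prob_space M" "f \<in> borel_measurable M" "integrable M (\<lambda>x. (f x)\<^sup>2)"
  shows "integrable M f"
proof -
  interpret prob_space M by fact
  have "integrable M (\<lambda>x. f x * 1)"
    by (rule integrable_prod_sq) (use assms in auto)
  then show ?thesis by simp
qed

lemma sq_sum_expand:
  fixes c :: "nat \<Rightarrow> nat \<Rightarrow> real"
  shows "(\<Sum>l<d. \<Sum>j<m. c l j)\<^sup>2 = (\<Sum>l<d. \<Sum>l'<d. \<Sum>j<m. \<Sum>j'<m. c l j * c l' j')"
  by (simp add: power2_eq_square sum_product)

lemma delta_sum:
  fixes g :: "nat \<Rightarrow> nat \<Rightarrow> nat \<Rightarrow> real"
  assumes "l < d"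
  shows "(\<Sum>l'<d. \<Sum>j<m. \<Sum>j'<m. g l' j j' * (if l = l' \<and> j = j' then V else 0)) = (\<Sum>j<m. g l j j * V)"
proof -
  have "(\<Sum>l'<d. \<Sum>j<m. \<Sum>j'<m. g l' j j' * (if l = l' \<and> j = j' then V else 0))
      = (\<Sum>l'<d. if l' = l then (\<Sum>j<m. g l j j * V) else 0)"
  proof (rule sum.cong[OF refl])
    fix l' assume "l' \<in> {..<d}"
    show "(\<Sum>j<m. \<Sum>j'<m. g l' j j' * (if l = l' \<and> j = j' then V else 0))
      = (if l' = l then (\<Sum>j<m. g l j j * V) else 0)"
    proof (cases "l' = l")
      case True
      have "(\<Sum>j<m. \<Sum>j'<m. g l' j j' * (if l = l' \<and> j = j' then V else 0))
          = (\<Sum>j<m. \<Sum>j'<m. (if j = j' then g l j j' * V else 0))"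
        using True by (intro sum.cong refl) auto
      also have "\<dots> = (\<Sum>j<m. g l j j * V)"
        by (intro sum.cong refl) (simp add: sum.delta)
      finally show ?thesis using True by simp
    qed auto
  qed
  also have "\<dots> = (\<Sum>j<m. g l j j * V)" using assms by (simp add: sum.delta')
  finally show ?thesis .
qed

lemma generic:
  fixes N :: "'w measure" and X :: "'w \<Rightarrow> nat \<times> nat \<Rightarrow> real" and Y :: "nat \<Rightarrow> nat \<Rightarrow> 'w \<Rightarrow> real"
    and H P :: "nat \<Rightarrow> nat \<Rightarrow> real"
  assumes PN: "prob_space N"
  and I2: "\<And>k l l' j j'. k < n \<Longrightarrow> l < d \<Longrightarrow> l' < d \<Longrightarrow> j < m \<Longrightarrow> j' < m \<Longrightarrow>
      integrable N (\<lambda>w. X w (l,j) * X w (l',j') * (Y j k w * Y j' k w))"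
  and E2: "\<And>k l l' j j'. k < n \<Longrightarrow> l < d \<Longrightarrow> l' < d \<Longrightarrow> j < m \<Longrightarrow> j' < m \<Longrightarrow>
      (\<integral>w. X w (l,j) * X w (l',j') * (Y j k w * Y j' k w) \<partial>N) = (if l = l' \<and> j = j' then V else 0)"
  and I1: "\<And>k l j. k < n \<Longrightarrow> l < d \<Longrightarrow> j < m \<Longrightarrow> integrable N (\<lambda>w. X w (l,j) * Y j k w)"
  and E1: "\<And>k l j. k < n \<Longrightarrow> l < d \<Longrightarrow> j < m \<Longrightarrow> (\<integral>w. X w (l,j) * Y j k w \<partial>N) = 0"
  defines "F \<equiv> \<lambda>w k a. \<Sum>j<m. X w (a,j) * Y j k w"
  shows "integrable N (\<lambda>w. frob_inner n d (proj_rows d P H) (proj_rows d P (F w)))"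
   "(\<integral>w. frob_inner n d (proj_rows d P H) (proj_rows d P (F w)) \<partial>N) = 0"
   "integrable N (\<lambda>w. frob_sq n d (proj_rows d P (F w)))"
   "(\<integral>w. frob_sq n d (proj_rows d P (F w)) \<partial>N) = real n * real m * V * (\<Sum>a<d. \<Sum>l<d. (P l a)\<^sup>2)"
   "integrable N (\<lambda>w. frob_sq n d (proj_rows d P (\<lambda>k a. H k a + F w k a)))"
   "(\<integral>w. frob_sq n d (proj_rows d P (\<lambda>k a. H k a + F w k a)) \<partial>N)
      = frob_sq n d (proj_rows d P H) + real n * real m * V * (\<Sum>a<d. \<Sum>l<d. (P l a)\<^sup>2)"
proof -
  interpret PN: prob_space N by (rule PN)
  have hb1: "has_bochner_integral N (\<lambda>w. X w (l,j) * Y j k w) 0" if "k < n" "l < d" "j < m" for k l j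
    using I1[OF that] E1[OF that] by (simp add: has_bochner_integral_iff)
  have hb2: "has_bochner_integral N (\<lambda>w. X w (l,j) * X w (l',j') * (Y j k w * Y j' k w))
       (if l = l' \<and> j = j' then V else 0)" if "k < n" "l < d" "l' < d" "j < m" "j' < m" for k l l' j j'
    using I2[OF that] E2[OF that] by (simp add: has_bochner_integral_iff)
  define PH where "PH = proj_rows d P H"
  have pr: "proj_rows d P (F w) k a = (\<Sum>l<d. \<Sum>j<m. P l a * (X w (l,j) * Y j k w))" for w k a
    by (simp add: proj_rows_def F_def sum_distrib_right sum_distrib_left mult_ac)
  have fi: "frob_inner n d PH (proj_rows d P (F w)) =
      (\<Sum>k<n. \<Sum>a<d. \<Sum>l<d. \<Sum>j<m. (PH k a * P l a) * (X w (l,j) * Y j k w))" for w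
    by (simp add: frob_inner_def pr sum_distrib_left mult_ac)
  show i1: "integrable N (\<lambda>w. frob_inner n d (proj_rows d P H) (proj_rows d P (F w)))"
    unfolding PH_def[symmetric] fi by (intro Bochner_Integration.integrable_sum Bochner_Integration.integrable_mult_right I1) auto
  show e0: "(\<integral>w. frob_inner n d (proj_rows d P H) (proj_rows d P (F w)) \<partial>N) = 0"
    unfolding PH_def[symmetric] fi
  proof (rule has_bochner_integral_integral_eq)
    have "has_bochner_integral N (\<lambda>w. \<Sum>k<n. \<Sum>a<d. \<Sum>l<d. \<Sum>j<m. (PH k a * P l a) * (X w (l,j) * Y j k w))
      (\<Sum>k<n. \<Sum>a<d. \<Sum>l<d. \<Sum>j<m. (PH k a * P l a) * 0)"
      by (intro has_bochner_integral_sum has_bochner_integral_mult_right hb1) auto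
    then show "has_bochner_integral N (\<lambda>w. \<Sum>k<n. \<Sum>a<d. \<Sum>l<d. \<Sum>j<m. (PH k a * P l a) * (X w (l,j) * Y j k w)) 0"
      by simp
  qed
  have fs: "frob_sq n d (proj_rows d P (F w)) =
      (\<Sum>k<n. \<Sum>a<d. \<Sum>l<d. \<Sum>l'<d. \<Sum>j<m. \<Sum>j'<m. (P l a * P l' a) *
          (X w (l,j) * X w (l',j') * (Y j k w * Y j' k w)))" for w
    by (simp add: frob_sq_def pr sq_sum_expand mult_ac)
  show i2: "integrable N (\<lambda>w. frob_sq n d (proj_rows d P (F w)))"
    unfolding fs by (intro Bochner_Integration.integrable_sum Bochner_Integration.integrable_mult_right I2) auto
  have "(\<integral>w. frob_sq n d (proj_rows d P (F w)) \<partial>N) =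
      (\<Sum>k<n. \<Sum>a<d. \<Sum>l<d. \<Sum>l'<d. \<Sum>j<m. \<Sum>j'<m. (P l a * P l' a) *
          (if l = l' \<and> j = j' then V else 0))"
    unfolding fs
    by (intro has_bochner_integral_integral_eq has_bochner_integral_sum has_bochner_integral_mult_right hb2) auto
  also have "\<dots> = (\<Sum>k<n. \<Sum>a<d. \<Sum>l<d. \<Sum>j<m. (P l a * P l a) * V)"
    by (intro sum.cong refl delta_sum) auto
  also have "\<dots> = real n * real m * V * (\<Sum>a<d. \<Sum>l<d. (P l a)\<^sup>2)"
    by (simp add: sum_distrib_left sum_distrib_right power2_eq_square mult_ac)
  finally show e2: "(\<integral>w. frob_sq n d (proj_rows d P (F w)) \<partial>N) = real n * real m * V * (\<Sum>a<d. \<Sum>l<d. (P l a)\<^sup>2)" .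
  have split: "frob_sq n d (proj_rows d P (\<lambda>k a. H k a + F w k a)) =
     frob_sq n d PH + 2 * frob_inner n d PH (proj_rows d P (F w)) + frob_sq n d (proj_rows d P (F w))" for w
  proof -
    have "proj_rows d P (\<lambda>k a. H k a + F w k a) k a = PH k a + proj_rows d P (F w) k a" for k a
      by (simp add: proj_rows_def PH_def distrib_right sum.distrib)
    then show ?thesis
      by (simp add: frob_sq_def frob_inner_def power2_sum sum.distrib sum_distrib_left mult.assoc)
  qed
  show "integrable N (\<lambda>w. frob_sq n d (proj_rows d P (\<lambda>k a. H k a + F w k a)))"
    unfolding split using i1 i2 unfolding PH_def by simp
  show "(\<integral>w. frob_sq n d (proj_rows d P (\<lambda>k a. H k a + F w k a)) \<partial>N)
      = frob_sq n d (proj_rows d P H) + real n * real m * V * (\<Sum>a<d. \<Sum>l<d. (P l a)\<^sup>2)"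
  proof -
    have "(\<integral>w. frob_sq n d (proj_rows d P (\<lambda>k a. H k a + F w k a)) \<partial>N)
       = (\<integral>w. frob_sq n d PH + 2 * frob_inner n d PH (proj_rows d P (F w)) + frob_sq n d (proj_rows d P (F w)) \<partial>N)"
      unfolding split ..
    also have "\<dots> = (\<integral>w. frob_sq n d PH + 2 * frob_inner n d PH (proj_rows d P (F w)) \<partial>N) + (\<integral>w. frob_sq n d (proj_rows d P (F w)) \<partial>N)"
      using i1 i2 unfolding PH_def by (intro Bochner_Integration.integral_add) auto
    also have "(\<integral>w. frob_sq n d PH + 2 * frob_inner n d PH (proj_rows d P (F w)) \<partial>N)
       = (\<integral>w. frob_sq n d PH \<partial>N) + (\<integral>w. 2 * frob_inner n d PH (proj_rows d P (F w)) \<partial>N)"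
      using i1 unfolding PH_def by (intro Bochner_Integration.integral_add) auto
    finally show ?thesis using e0 e2 PN.prob_space unfolding PH_def by simp
  qed
qed

lemma gm_meas_lin:
  assumes "j < nr"
  shows "(\<lambda>W. \<Sum>l<nc. W (j,l) * h l) \<in> borel_measurable (gauss_mat nr nc s)"
  using assms by (intro borel_measurable_sum borel_measurable_times gm_meas_comp borel_measurable_const) auto

lemma gm_phi:
  fixes g :: "real \<Rightarrow> real"
  assumes "0 < s" "j < nr" "(\<Sum>l<nc. (h l)\<^sup>2) = c\<^sup>2" "0 \<le> c"
    and g: "g \<in> borel_measurable borel" and gi: "integrable (gauss (s\<^sup>2 * c\<^sup>2)) (\<lambda>x. (g x)\<^sup>2)"
  shows "(\<lambda>W. g (\<Sum>l<nc. W (j,l) * h l)) \<in> borel_measurable (gauss_mat nr nc s)"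
    "integrable (gauss_mat nr nc s) (\<lambda>W. (g (\<Sum>l<nc. W (j,l) * h l))\<^sup>2)"
    "(\<integral>W. (g (\<Sum>l<nc. W (j,l) * h l))\<^sup>2 \<partial>gauss_mat nr nc s) = (\<integral>x. (g x)\<^sup>2 \<partial>gauss (s\<^sup>2 * c\<^sup>2))"
proof -
  show "(\<lambda>W. g (\<Sum>l<nc. W (j,l) * h l)) \<in> borel_measurable (gauss_mat nr nc s)"
    using measurable_compose[OF gm_meas_lin[OF assms(2)] g] by (simp add: comp_def)
  have g2: "(\<lambda>x. (g x)\<^sup>2) \<in> borel_measurable borel" using g by simp
  show "integrable (gauss_mat nr nc s) (\<lambda>W. (g (\<Sum>l<nc. W (j,l) * h l))\<^sup>2)"
    using gm_lin_gauss(1)[OF assms(1-4) g2 gi] .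
  show "(\<integral>W. (g (\<Sum>l<nc. W (j,l) * h l))\<^sup>2 \<partial>gauss_mat nr nc s) = (\<integral>x. (g x)\<^sup>2 \<partial>gauss (s\<^sup>2 * c\<^sup>2))"
    using gm_lin_gauss(2)[OF assms(1-4) g2 gi] .
qed

lemma prob_const1:
  assumes "prob_space M"
  shows "integrable M (\<lambda>_. 1::real)" "(\<integral>x. 1 \<partial>M) = (1::real)"
proof -
  interpret prob_space M by fact
  show "integrable M (\<lambda>_. 1::real)" by simp
  show "(\<integral>x. 1 \<partial>M) = (1::real)" using prob_space by simp
qed

lemma single_part:
  fixes d m r n :: nat and \<sigma> \<tau>s \<tau>g c :: real and \<phi> :: "real \<Rightarrow> real" and H P :: "nat \<Rightarrow> nat \<Rightarrow> real"
  assumes pos: "0 < \<sigma>" "0 < \<tau>s" "0 < \<tau>g"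
    and \<phi>m: "\<phi> \<in> borel_measurable borel" and \<phi>i: "integrable (gauss (\<sigma>\<^sup>2 * c\<^sup>2)) (\<lambda>x. (\<phi> x)\<^sup>2)"
    and Hc: "\<And>k. k < n \<Longrightarrow> (\<Sum>l<d. (H k l)\<^sup>2) = c\<^sup>2" and c0: "0 \<le> c"
  defines "E\<phi> \<equiv> (\<integral>x. (\<phi> x)\<^sup>2 \<partial>gauss (\<sigma>\<^sup>2 * c\<^sup>2))"
    and "M \<equiv> weights d m r \<sigma> \<tau>s \<tau>g"
  shows "integrable M (\<lambda>(Wi, Wg, Wu, Wo, Wot).
        frob_inner n d (proj_rows d P H) (proj_rows d P (F_single d m \<phi> Wi Wo H)))"
   "(\<integral>(Wi, Wg, Wu, Wo, Wot).
        frob_inner n d (proj_rows d P H) (proj_rows d P (F_single d m \<phi> Wi Wo H)) \<partial>M) = 0"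
   "(\<integral>(Wi, Wg, Wu, Wo, Wot).
        frob_sq n d (proj_rows d P (F_single d m \<phi> Wi Wo H)) \<partial>M)
      = real n * real m * (\<tau>s\<^sup>2 * E\<phi>) * (\<Sum>a<d. \<Sum>l<d. (P l a)\<^sup>2)"
   "integrable M (\<lambda>(Wi, Wg, Wu, Wo, Wot).
        frob_sq n d (proj_rows d P (\<lambda>k a. H k a + F_single d m \<phi> Wi Wo H k a)))"
   "(\<integral>(Wi, Wg, Wu, Wo, Wot).
        frob_sq n d (proj_rows d P (\<lambda>k a. H k a + F_single d m \<phi> Wi Wo H k a)) \<partial>M)
      = frob_sq n d (proj_rows d P H) + real n * real m * (\<tau>s\<^sup>2 * E\<phi>) * (\<Sum>a<d. \<Sum>l<d. (P l a)\<^sup>2)"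
proof -
  note PMi = prob_gauss_mat[OF pos(1), of m d]
  note PMg = prob_gauss_mat[OF pos(1), of r d]
  note PMo = prob_gauss_mat[OF pos(2), of d m]
  note PMt = prob_gauss_mat[OF pos(3), of d r]
  have PM: "prob_space M" unfolding M_def weights_def
    by (intro prob_space_pair PMi PMg PMo PMt)
  note c1g = prob_const1[OF PMg] and c1t = prob_const1[OF PMt] and c1i = prob_const1[OF PMi]
  note phi = gm_phi[OF pos(1) _ Hc c0 \<phi>m \<phi>i]
  have I2: "integrable M (\<lambda>w. fst (snd (snd (snd w))) (l,j) * fst (snd (snd (snd w))) (l',j') *
            (\<phi> (\<Sum>la<d. fst w (j,la) * H k la) * \<phi> (\<Sum>la<d. fst w (j',la) * H k la)))"
   and E2: "(\<integral>w. fst (snd (snd (snd w))) (l,j) * fst (snd (snd (snd w))) (l',j') *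
            (\<phi> (\<Sum>la<d. fst w (j,la) * H k la) * \<phi> (\<Sum>la<d. fst w (j',la) * H k la)) \<partial>M)
          = (if l = l' \<and> j = j' then \<tau>s\<^sup>2 * E\<phi> else 0)"
    if "k < n" "l < d" "l' < d" "j < m" "j' < m" for k l l' j j'
  proof -
    have i1: "integrable (gauss_mat m d \<sigma>) (\<lambda>Wi. \<phi> (\<Sum>la<d. Wi (j,la) * H k la) * \<phi> (\<Sum>la<d. Wi (j',la) * H k la))"
      by (rule integrable_prod_sq; rule phi; rule that)
    have mem: "(l,j) \<in> {..<d} \<times> {..<m}" "(l',j') \<in> {..<d} \<times> {..<m}" using that by auto
    note i4 = gm_mom2[OF mem pos(2)]
    note R = prod5[OF PMi PMg PMg PMo PMt i1 c1g(1) c1g(1) i4(1) c1t(1)]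
    show "integrable M (\<lambda>w. fst (snd (snd (snd w))) (l,j) * fst (snd (snd (snd w))) (l',j') *
            (\<phi> (\<Sum>la<d. fst w (j,la) * H k la) * \<phi> (\<Sum>la<d. fst w (j',la) * H k la)))"
      unfolding M_def weights_def
      by (rule Bochner_Integration.integrable_cong[OF refl, THEN iffD1, OF _ R(1)])
         (simp only: mult_ac mult_1_left mult_1_right)
    have "(\<integral>w. fst (snd (snd (snd w))) (l,j) * fst (snd (snd (snd w))) (l',j') *
            (\<phi> (\<Sum>la<d. fst w (j,la) * H k la) * \<phi> (\<Sum>la<d. fst w (j',la) * H k la)) \<partial>M)
        = (\<integral>Wi. \<phi> (\<Sum>la<d. Wi (j,la) * H k la) * \<phi> (\<Sum>la<d. Wi (j',la) * H k la) \<partial>gauss_mat m d \<sigma>) *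
          (if (l,j) = (l',j') then \<tau>s\<^sup>2 else 0)"
    proof -
      have "(\<integral>w. fst (snd (snd (snd w))) (l,j) * fst (snd (snd (snd w))) (l',j') *
            (\<phi> (\<Sum>la<d. fst w (j,la) * H k la) * \<phi> (\<Sum>la<d. fst w (j',la) * H k la)) \<partial>M)
         = (\<integral>w. (\<lambda>Wi. \<phi> (\<Sum>la<d. Wi (j,la) * H k la) * \<phi> (\<Sum>la<d. Wi (j',la) * H k la)) (fst w) *
             ((\<lambda>_. 1) (fst (snd w)) * ((\<lambda>_. 1) (fst (snd (snd w))) *
             ((\<lambda>Wo. Wo (l,j) * Wo (l',j')) (fst (snd (snd (snd w)))) * (\<lambda>_. 1) (snd (snd (snd (snd w))))))) \<partial>M)"
        by (rule Bochner_Integration.integral_cong[OF refl]) (simp only: mult_ac mult_1_left mult_1_right)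
      also note R(2)[folded weights_def, folded M_def]
      finally show ?thesis using i4(2) c1g(2) c1t(2) by simp
    qed
    also have "\<dots> = (if l = l' \<and> j = j' then \<tau>s\<^sup>2 * E\<phi> else 0)"
      using phi(3)[OF that(4) that(1)] phi(3)[OF that(5) that(1)] by (simp add: power2_eq_square E\<phi>_def)
    finally show "(\<integral>w. fst (snd (snd (snd w))) (l,j) * fst (snd (snd (snd w))) (l',j') *
            (\<phi> (\<Sum>la<d. fst w (j,la) * H k la) * \<phi> (\<Sum>la<d. fst w (j',la) * H k la)) \<partial>M)
          = (if l = l' \<and> j = j' then \<tau>s\<^sup>2 * E\<phi> else 0)" .
  qed
  have I1: "integrable M (\<lambda>w. fst (snd (snd (snd w))) (l,j) * \<phi> (\<Sum>la<d. fst w (j,la) * H k la))"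
   and E1: "(\<integral>w. fst (snd (snd (snd w))) (l,j) * \<phi> (\<Sum>la<d. fst w (j,la) * H k la) \<partial>M) = 0"
    if "k < n" "l < d" "j < m" for k l j
  proof -
    have i1: "integrable (gauss_mat m d \<sigma>) (\<lambda>Wi. \<phi> (\<Sum>la<d. Wi (j,la) * H k la))"
      by (rule integrable_of_sq[OF PMi]; rule phi; rule that)
    have mem: "(l,j) \<in> {..<d} \<times> {..<m}" using that by auto
    note i4 = gm_mom1[OF mem pos(2)]
    note R = prod5[OF PMi PMg PMg PMo PMt i1 c1g(1) c1g(1) i4(1) c1t(1)]
    show "integrable M (\<lambda>w. fst (snd (snd (snd w))) (l,j) * \<phi> (\<Sum>la<d. fst w (j,la) * H k la))"
      unfolding M_def weights_def
      by (rule Bochner_Integration.integrable_cong[OF refl, THEN iffD1, OF _ R(1)])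
         (simp only: mult_ac mult_1_left mult_1_right)
    show "(\<integral>w. fst (snd (snd (snd w))) (l,j) * \<phi> (\<Sum>la<d. fst w (j,la) * H k la) \<partial>M) = 0"
    proof -
      have "(\<integral>w. fst (snd (snd (snd w))) (l,j) * \<phi> (\<Sum>la<d. fst w (j,la) * H k la) \<partial>M)
         = (\<integral>w. (\<lambda>Wi. \<phi> (\<Sum>la<d. Wi (j,la) * H k la)) (fst w) *
             ((\<lambda>_. 1) (fst (snd w)) * ((\<lambda>_. 1) (fst (snd (snd w))) *
             ((\<lambda>Wo. Wo (l,j)) (fst (snd (snd (snd w)))) * (\<lambda>_. 1) (snd (snd (snd (snd w))))))) \<partial>M)"
        by (rule Bochner_Integration.integral_cong[OF refl]) (simp only: mult_ac mult_1_left mult_1_right)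
      also note R(2)[folded weights_def, folded M_def]
      finally show ?thesis using i4(2) by simp
    qed
  qed
  note G = generic[where N=M and X="\<lambda>w. fst (snd (snd (snd w)))"
     and Y="\<lambda>j k w. \<phi> (\<Sum>la<d. fst w (j,la) * H k la)" and V="\<tau>s\<^sup>2 * E\<phi>" and n=n and d=d and m=m, OF PM I2 E2 I1 E1]
  have FS: "F_single d m \<phi> (fst w) (fst (snd (snd (snd w)))) H =
     (\<lambda>k a. \<Sum>j<m. fst (snd (snd (snd w))) (a, j) * \<phi> (\<Sum>la<d. fst w (j, la) * H k la))" for w
    by (simp add: F_single_def fun_eq_iff)
  have cp: "(\<lambda>(Wi, Wg, Wu, Wo, Wot). Q Wi Wo) = (\<lambda>w. Q (fst w) (fst (snd (snd (snd w)))))" for Q :: "rmat \<Rightarrow> rmat \<Rightarrow> real"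
    by (intro ext) (simp add: split_beta)
  show "integrable M (\<lambda>(Wi, Wg, Wu, Wo, Wot).
        frob_inner n d (proj_rows d P H) (proj_rows d P (F_single d m \<phi> Wi Wo H)))"
    unfolding cp FS by (rule G(1))
  show "(\<integral>(Wi, Wg, Wu, Wo, Wot).
        frob_inner n d (proj_rows d P H) (proj_rows d P (F_single d m \<phi> Wi Wo H)) \<partial>M) = 0"
    unfolding cp FS by (rule G(2))
  show "(\<integral>(Wi, Wg, Wu, Wo, Wot).
        frob_sq n d (proj_rows d P (F_single d m \<phi> Wi Wo H)) \<partial>M)
      = real n * real m * (\<tau>s\<^sup>2 * E\<phi>) * (\<Sum>a<d. \<Sum>l<d. (P l a)\<^sup>2)"
    unfolding cp FS by (rule G(4))
  show "integrable M (\<lambda>(Wi, Wg, Wu, Wo, Wot).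
        frob_sq n d (proj_rows d P (\<lambda>k a. H k a + F_single d m \<phi> Wi Wo H k a)))"
    unfolding cp FS by (rule G(5))
  show "(\<integral>(Wi, Wg, Wu, Wo, Wot).
        frob_sq n d (proj_rows d P (\<lambda>k a. H k a + F_single d m \<phi> Wi Wo H k a)) \<partial>M)
      = frob_sq n d (proj_rows d P H) + real n * real m * (\<tau>s\<^sup>2 * E\<phi>) * (\<Sum>a<d. \<Sum>l<d. (P l a)\<^sup>2)"
    unfolding cp FS by (rule G(6))
qed

lemma gate_part:
  fixes d m r n :: nat and \<sigma> \<tau>s \<tau>g c :: real and \<psi> :: "real \<Rightarrow> real" and H P :: "nat \<Rightarrow> nat \<Rightarrow> real"
  assumes pos: "0 < \<sigma>" "0 < \<tau>s" "0 < \<tau>g"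
    and \<psi>m: "\<psi> \<in> borel_measurable borel" and \<psi>i: "integrable (gauss (\<sigma>\<^sup>2 * c\<^sup>2)) (\<lambda>x. (\<psi> x)\<^sup>2)"
    and Hc: "\<And>k. k < n \<Longrightarrow> (\<Sum>l<d. (H k l)\<^sup>2) = c\<^sup>2" and c0: "0 \<le> c"
  defines "E\<psi> \<equiv> (\<integral>x. (\<psi> x)\<^sup>2 \<partial>gauss (\<sigma>\<^sup>2 * c\<^sup>2))"
    and "M \<equiv> weights d m r \<sigma> \<tau>s \<tau>g"
  shows "integrable M (\<lambda>(Wi, Wg, Wu, Wo, Wot).
        frob_inner n d (proj_rows d P H) (proj_rows d P (F_gate d r \<psi> Wg Wu Wot H)))"
   "(\<integral>(Wi, Wg, Wu, Wo, Wot).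
        frob_inner n d (proj_rows d P H) (proj_rows d P (F_gate d r \<psi> Wg Wu Wot H)) \<partial>M) = 0"
   "integrable M (\<lambda>(Wi, Wg, Wu, Wo, Wot).
        frob_sq n d (proj_rows d P (\<lambda>k a. H k a + F_gate d r \<psi> Wg Wu Wot H k a)))"
   "(\<integral>(Wi, Wg, Wu, Wo, Wot).
        frob_sq n d (proj_rows d P (\<lambda>k a. H k a + F_gate d r \<psi> Wg Wu Wot H k a)) \<partial>M)
      = frob_sq n d (proj_rows d P H) + real n * real r * (\<tau>g\<^sup>2 * (\<sigma>\<^sup>2 * c\<^sup>2 * E\<psi>)) * (\<Sum>a<d. \<Sum>l<d. (P l a)\<^sup>2)"
proof -
  note PMi = prob_gauss_mat[OF pos(1), of m d]
  note PMg = prob_gauss_mat[OF pos(1), of r d]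
  note PMo = prob_gauss_mat[OF pos(2), of d m]
  note PMt = prob_gauss_mat[OF pos(3), of d r]
  have PM: "prob_space M" unfolding M_def weights_def
    by (intro prob_space_pair PMi PMg PMo PMt)
  note c1o = prob_const1[OF PMo] and c1t = prob_const1[OF PMt] and c1i = prob_const1[OF PMi]
  note psi = gm_phi[OF pos(1) _ Hc c0 \<psi>m \<psi>i]
  have v0: "0 \<le> \<sigma>\<^sup>2 * c\<^sup>2" by simp
  have idm: "(\<lambda>x::real. x) \<in> borel_measurable borel" by simp
  note u = gm_phi[OF pos(1) _ Hc c0 idm gauss_sq(1)[OF v0]]
  have I2: "integrable M (\<lambda>w. snd (snd (snd (snd w))) (l,j) * snd (snd (snd (snd w))) (l',j') *
            ((\<psi> (\<Sum>la<d. fst (snd w) (j,la) * H k la) * (\<Sum>la<d. fst (snd (snd w)) (j,la) * H k la)) *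
             (\<psi> (\<Sum>la<d. fst (snd w) (j',la) * H k la) * (\<Sum>la<d. fst (snd (snd w)) (j',la) * H k la))))"
   and E2: "(\<integral>w. snd (snd (snd (snd w))) (l,j) * snd (snd (snd (snd w))) (l',j') *
            ((\<psi> (\<Sum>la<d. fst (snd w) (j,la) * H k la) * (\<Sum>la<d. fst (snd (snd w)) (j,la) * H k la)) *
             (\<psi> (\<Sum>la<d. fst (snd w) (j',la) * H k la) * (\<Sum>la<d. fst (snd (snd w)) (j',la) * H k la))) \<partial>M)
          = (if l = l' \<and> j = j' then \<tau>g\<^sup>2 * (\<sigma>\<^sup>2 * c\<^sup>2 * E\<psi>) else 0)"
    if "k < n" "l < d" "l' < d" "j < r" "j' < r" for k l l' j j'
  proof -
    have i2: "integrable (gauss_mat r d \<sigma>) (\<lambda>W. \<psi> (\<Sum>la<d. W (j,la) * H k la) * \<psi> (\<Sum>la<d. W (j',la) * H k la))"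
      by (rule integrable_prod_sq; rule psi; rule that)
    have i3: "integrable (gauss_mat r d \<sigma>) (\<lambda>W. (\<Sum>la<d. W (j,la) * H k la) * (\<Sum>la<d. W (j',la) * H k la))"
      by (rule integrable_prod_sq; rule u; rule that)
    have mem: "(l,j) \<in> {..<d} \<times> {..<r}" "(l',j') \<in> {..<d} \<times> {..<r}" using that by auto
    note i5 = gm_mom2[OF mem pos(3)]
    note R = prod5[OF PMi PMg PMg PMo PMt c1i(1) i2 i3 c1o(1) i5(1)]
    show "integrable M (\<lambda>w. snd (snd (snd (snd w))) (l,j) * snd (snd (snd (snd w))) (l',j') *
            ((\<psi> (\<Sum>la<d. fst (snd w) (j,la) * H k la) * (\<Sum>la<d. fst (snd (snd w)) (j,la) * H k la)) *
             (\<psi> (\<Sum>la<d. fst (snd w) (j',la) * H k la) * (\<Sum>la<d. fst (snd (snd w)) (j',la) * H k la))))"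
      unfolding M_def weights_def
      by (rule Bochner_Integration.integrable_cong[OF refl, THEN iffD1, OF _ R(1)])
         (simp only: mult_ac mult_1_left mult_1_right)
    have "(\<integral>w. snd (snd (snd (snd w))) (l,j) * snd (snd (snd (snd w))) (l',j') *
            ((\<psi> (\<Sum>la<d. fst (snd w) (j,la) * H k la) * (\<Sum>la<d. fst (snd (snd w)) (j,la) * H k la)) *
             (\<psi> (\<Sum>la<d. fst (snd w) (j',la) * H k la) * (\<Sum>la<d. fst (snd (snd w)) (j',la) * H k la))) \<partial>M)
        = (\<integral>w. (\<lambda>_. 1) (fst w) *
             ((\<lambda>W. \<psi> (\<Sum>la<d. W (j,la) * H k la) * \<psi> (\<Sum>la<d. W (j',la) * H k la)) (fst (snd w)) *
             ((\<lambda>W. (\<Sum>la<d. W (j,la) * H k la) * (\<Sum>la<d. W (j',la) * H k la)) (fst (snd (snd w))) *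
             ((\<lambda>_. 1) (fst (snd (snd (snd w)))) *
              (\<lambda>Wo. Wo (l,j) * Wo (l',j')) (snd (snd (snd (snd w))))))) \<partial>M)"
      by (rule Bochner_Integration.integral_cong[OF refl]) (simp only: mult_ac mult_1_left mult_1_right)
    also note R(2)[folded weights_def, folded M_def]
    also have "(\<integral>x. 1 \<partial>gauss_mat m d \<sigma>) *
      ((\<integral>W. \<psi> (\<Sum>la<d. W (j,la) * H k la) * \<psi> (\<Sum>la<d. W (j',la) * H k la) \<partial>gauss_mat r d \<sigma>) *
       ((\<integral>W. (\<Sum>la<d. W (j,la) * H k la) * (\<Sum>la<d. W (j',la) * H k la) \<partial>gauss_mat r d \<sigma>) *
        ((\<integral>x. 1 \<partial>gauss_mat d m \<tau>s) * (\<integral>W. W (l,j) * W (l',j') \<partial>gauss_mat d r \<tau>g))))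
      = (if l = l' \<and> j = j' then \<tau>g\<^sup>2 * (\<sigma>\<^sup>2 * c\<^sup>2 * E\<psi>) else 0)"
      using psi(3)[OF that(4) that(1)] psi(3)[OF that(5) that(1)]
        u(3)[OF that(4) that(1)] u(3)[OF that(5) that(1)] gauss_sq(2)[OF v0]
        i5(2) c1i(2) c1o(2)
      by (simp add: power2_eq_square E\<psi>_def)
    finally show "(\<integral>w. snd (snd (snd (snd w))) (l,j) * snd (snd (snd (snd w))) (l',j') *
            ((\<psi> (\<Sum>la<d. fst (snd w) (j,la) * H k la) * (\<Sum>la<d. fst (snd (snd w)) (j,la) * H k la)) *
             (\<psi> (\<Sum>la<d. fst (snd w) (j',la) * H k la) * (\<Sum>la<d. fst (snd (snd w)) (j',la) * H k la))) \<partial>M)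
          = (if l = l' \<and> j = j' then \<tau>g\<^sup>2 * (\<sigma>\<^sup>2 * c\<^sup>2 * E\<psi>) else 0)" .
  qed
  have I1: "integrable M (\<lambda>w. snd (snd (snd (snd w))) (l,j) *
            (\<psi> (\<Sum>la<d. fst (snd w) (j,la) * H k la) * (\<Sum>la<d. fst (snd (snd w)) (j,la) * H k la)))"
   and E1: "(\<integral>w. snd (snd (snd (snd w))) (l,j) *
            (\<psi> (\<Sum>la<d. fst (snd w) (j,la) * H k la) * (\<Sum>la<d. fst (snd (snd w)) (j,la) * H k la)) \<partial>M) = 0"
    if "k < n" "l < d" "j < r" for k l j
  proof -
    have i2: "integrable (gauss_mat r d \<sigma>) (\<lambda>W. \<psi> (\<Sum>la<d. W (j,la) * H k la))"
      by (rule integrable_of_sq[OF PMg]; rule psi; rule that)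
    have i3: "integrable (gauss_mat r d \<sigma>) (\<lambda>W. (\<Sum>la<d. W (j,la) * H k la))"
      by (rule integrable_of_sq[OF PMg]; rule u; rule that)
    have mem: "(l,j) \<in> {..<d} \<times> {..<r}" using that by auto
    note i5 = gm_mom1[OF mem pos(3)]
    note R = prod5[OF PMi PMg PMg PMo PMt c1i(1) i2 i3 c1o(1) i5(1)]
    show "integrable M (\<lambda>w. snd (snd (snd (snd w))) (l,j) *
            (\<psi> (\<Sum>la<d. fst (snd w) (j,la) * H k la) * (\<Sum>la<d. fst (snd (snd w)) (j,la) * H k la)))"
      unfolding M_def weights_def
      by (rule Bochner_Integration.integrable_cong[OF refl, THEN iffD1, OF _ R(1)])
         (simp only: mult_ac mult_1_left mult_1_right)
    have "(\<integral>w. snd (snd (snd (snd w))) (l,j) *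
            (\<psi> (\<Sum>la<d. fst (snd w) (j,la) * H k la) * (\<Sum>la<d. fst (snd (snd w)) (j,la) * H k la)) \<partial>M)
       = (\<integral>w. (\<lambda>_. 1) (fst w) *
             ((\<lambda>W. \<psi> (\<Sum>la<d. W (j,la) * H k la)) (fst (snd w)) *
             ((\<lambda>W. (\<Sum>la<d. W (j,la) * H k la)) (fst (snd (snd w))) *
             ((\<lambda>_. 1) (fst (snd (snd (snd w)))) *
              (\<lambda>Wo. Wo (l,j)) (snd (snd (snd (snd w))))))) \<partial>M)"
      by (rule Bochner_Integration.integral_cong[OF refl]) (simp only: mult_ac mult_1_left mult_1_right)
    also note R(2)[folded weights_def, folded M_def]
    finally show "(\<integral>w. snd (snd (snd (snd w))) (l,j) *
            (\<psi> (\<Sum>la<d. fst (snd w) (j,la) * H k la) * (\<Sum>la<d. fst (snd (snd w)) (j,la) * H k la)) \<partial>M) = 0"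
      using i5(2) by simp
  qed
  note G = generic[where N=M and X="\<lambda>w. snd (snd (snd (snd w)))"
     and Y="\<lambda>j k w. \<psi> (\<Sum>la<d. fst (snd w) (j,la) * H k la) * (\<Sum>la<d. fst (snd (snd w)) (j,la) * H k la)"
     and V="\<tau>g\<^sup>2 * (\<sigma>\<^sup>2 * c\<^sup>2 * E\<psi>)" and n=n and d=d and m=r, OF PM I2 E2 I1 E1]
  have FS: "F_gate d r \<psi> (fst (snd w)) (fst (snd (snd w))) (snd (snd (snd (snd w)))) H =
     (\<lambda>k a. \<Sum>j<r. snd (snd (snd (snd w))) (a, j) *
        (\<psi> (\<Sum>la<d. fst (snd w) (j,la) * H k la) * (\<Sum>la<d. fst (snd (snd w)) (j,la) * H k la)))" for w
    by (simp add: F_gate_def fun_eq_iff)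
  have cp: "(\<lambda>(Wi, Wg, Wu, Wo, Wot). Q Wg Wu Wot) = (\<lambda>w. Q (fst (snd w)) (fst (snd (snd w))) (snd (snd (snd (snd w)))))"
    for Q :: "rmat \<Rightarrow> rmat \<Rightarrow> rmat \<Rightarrow> real"
    by (intro ext) (simp add: split_beta)
  show "integrable M (\<lambda>(Wi, Wg, Wu, Wo, Wot).
        frob_inner n d (proj_rows d P H) (proj_rows d P (F_gate d r \<psi> Wg Wu Wot H)))"
    unfolding cp FS by (rule G(1))
  show "(\<integral>(Wi, Wg, Wu, Wo, Wot).
        frob_inner n d (proj_rows d P H) (proj_rows d P (F_gate d r \<psi> Wg Wu Wot H)) \<partial>M) = 0"
    unfolding cp FS by (rule G(2))
  show "integrable M (\<lambda>(Wi, Wg, Wu, Wo, Wot).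
        frob_sq n d (proj_rows d P (\<lambda>k a. H k a + F_gate d r \<psi> Wg Wu Wot H k a)))"
    unfolding cp FS by (rule G(5))
  show "(\<integral>(Wi, Wg, Wu, Wo, Wot).
        frob_sq n d (proj_rows d P (\<lambda>k a. H k a + F_gate d r \<psi> Wg Wu Wot H k a)) \<partial>M)
      = frob_sq n d (proj_rows d P H) + real n * real r * (\<tau>g\<^sup>2 * (\<sigma>\<^sup>2 * c\<^sup>2 * E\<psi>)) * (\<Sum>a<d. \<Sum>l<d. (P l a)\<^sup>2)"
    unfolding cp FS by (rule G(6))
qed

theorem corollary4:
  fixes d m r n :: nat and \<sigma> \<tau>s \<tau>g c :: real
    and \<phi> \<psi> :: "real \<Rightarrow> real"
    and H P :: "nat \<Rightarrow> nat \<Rightarrow> real"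
  defines "M \<equiv> weights d m r \<sigma> \<tau>s \<tau>g"
      and "\<nu> \<equiv> \<sigma>\<^sup>2 * c\<^sup>2"
  defines "E\<phi> \<equiv> (\<integral>x. (\<phi> x)\<^sup>2 \<partial>gauss \<nu>)"
      and "E\<psi> \<equiv> (\<integral>x. (\<psi> x)\<^sup>2 \<partial>gauss \<nu>)"
  defines "\<rho>0 \<equiv> (\<tau>g\<^sup>2 / \<tau>s\<^sup>2) * (real r / real m) * (\<nu> * E\<psi> / E\<phi>)"
      and "PH \<equiv> frob_sq n d (proj_rows d P H)"
      and "A \<equiv> (\<integral>(Wi, Wg, Wu, Wo, Wot).
                 frob_sq n d (proj_rows d P (F_single d m \<phi> Wi Wo H)) \<partial>M)"
  defines "\<rho>bar \<equiv> (PH + \<rho>0 * A) / (PH + A)"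
  assumes "0 < d" "0 < m" "0 < r" "0 < n"
    and "0 < \<sigma>" "0 < \<tau>s" "0 < \<tau>g"
    and "\<phi> \<in> borel_measurable borel" "\<psi> \<in> borel_measurable borel"
    and "integrable (gauss \<nu>) (\<lambda>x. (\<phi> x)\<^sup>2)"
    and "integrable (gauss \<nu>) (\<lambda>x. (\<psi> x)\<^sup>2)"
    and "\<forall>k<n. sqrt (\<Sum>l<d. (H k l)\<^sup>2) = c"
    and "E\<phi> > 0"
    and "orth_projector d P"
  shows
    "(integrable M (\<lambda>(Wi, Wg, Wu, Wo, Wot).
        frob_inner n d (proj_rows d P H) (proj_rows d P (F_single d m \<phi> Wi Wo H))))
     \<and> (integrable M (\<lambda>(Wi, Wg, Wu, Wo, Wot).
        frob_inner n d (proj_rows d P H) (proj_rows d P (F_gate d r \<psi> Wg Wu Wot H))))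
     \<and> ((\<integral>(Wi, Wg, Wu, Wo, Wot).
        frob_inner n d (proj_rows d P H) (proj_rows d P (F_single d m \<phi> Wi Wo H)) \<partial>M) = 0)
     \<and> ((\<integral>(Wi, Wg, Wu, Wo, Wot).
        frob_inner n d (proj_rows d P H) (proj_rows d P (F_gate d r \<psi> Wg Wu Wot H)) \<partial>M) = 0)
     \<and> (integrable M (\<lambda>(Wi, Wg, Wu, Wo, Wot).
        frob_sq n d (proj_rows d P (\<lambda>k a. H k a + F_single d m \<phi> Wi Wo H k a))))
     \<and> (integrable M (\<lambda>(Wi, Wg, Wu, Wo, Wot).
        frob_sq n d (proj_rows d P (\<lambda>k a. H k a + F_gate d r \<psi> Wg Wu Wot H k a))))
     \<and> ((\<integral>(Wi, Wg, Wu, Wo, Wot).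
        frob_sq n d (proj_rows d P (\<lambda>k a. H k a + F_single d m \<phi> Wi Wo H k a)) \<partial>M) = PH + A)
     \<and> ((\<integral>(Wi, Wg, Wu, Wo, Wot).
        frob_sq n d (proj_rows d P (\<lambda>k a. H k a + F_gate d r \<psi> Wg Wu Wot H k a)) \<partial>M) = PH + \<rho>0 * A)
     \<and> ((\<integral>(Wi, Wg, Wu, Wo, Wot).
        frob_sq n d (proj_rows d P (\<lambda>k a. H k a + F_gate d r \<psi> Wg Wu Wot H k a)) \<partial>M)
     = \<rho>bar * (\<integral>(Wi, Wg, Wu, Wo, Wot).
        frob_sq n d (proj_rows d P (\<lambda>k a. H k a + F_single d m \<phi> Wi Wo H k a)) \<partial>M))
     \<and> (A > 0 \<and> \<rho>0 < 1 \<longrightarrow> \<rho>bar < 1)"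
proof -
  note pos = assms(13,14,15)
  have c0: "0 \<le> c"
  proof -
    have "sqrt (\<Sum>l<d. (H 0 l)\<^sup>2) = c" by (rule assms(20)[rule_format, OF assms(12)])
    moreover have "0 \<le> sqrt (\<Sum>l<d. (H 0 l)\<^sup>2)" by (intro real_sqrt_ge_zero sum_nonneg) auto
    ultimately show ?thesis by simp
  qed
  have Hc': "(\<Sum>l<d. (H k l)\<^sup>2) = c\<^sup>2" if "k < n" for k
  proof -
    have e: "sqrt (\<Sum>l<d. (H k l)\<^sup>2) = c" by (rule assms(20)[rule_format, OF that])
    have "0 \<le> (\<Sum>l<d. (H k l)\<^sup>2)" by (intro sum_nonneg) auto
    from real_sqrt_pow2[OF this] show ?thesis unfolding e by (rule sym)
  qed
  have \<phi>i: "integrable (gauss (\<sigma>\<^sup>2 * c\<^sup>2)) (\<lambda>x. (\<phi> x)\<^sup>2)" using assms(18) unfolding \<nu>_def .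
  have \<psi>i: "integrable (gauss (\<sigma>\<^sup>2 * c\<^sup>2)) (\<lambda>x. (\<psi> x)\<^sup>2)" using assms(19) unfolding \<nu>_def .
  note S = single_part[where d=d and m=m and r=r and n=n and P=P and H=H and c=c, OF pos assms(16) \<phi>i Hc' c0,
      folded M_def \<nu>_def, folded E\<phi>_def PH_def]
  note G = gate_part[where d=d and m=m and r=r and n=n and P=P and H=H and c=c, OF pos assms(17) \<psi>i Hc' c0,
      folded M_def \<nu>_def, folded E\<psi>_def PH_def]
  define T where "T = (\<Sum>a<d. \<Sum>l<d. (P l a)\<^sup>2)"
  have A_eq: "A = real n * real m * (\<tau>s\<^sup>2 * E\<phi>) * T"
    unfolding A_def T_def using S(3) .
  have SI: "(\<integral>(Wi, Wg, Wu, Wo, Wot).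
        frob_sq n d (proj_rows d P (\<lambda>k a. H k a + F_single d m \<phi> Wi Wo H k a)) \<partial>M) = PH + A"
    using S(5) A_eq unfolding T_def by simp
  have rA: "\<rho>0 * A = real n * real r * (\<tau>g\<^sup>2 * (\<nu> * E\<psi>)) * T"
  proof -
    have m0: "real m \<noteq> 0" using assms(10) by simp
    have t0: "\<tau>s\<^sup>2 \<noteq> 0" using assms(14) by simp
    have e0: "E\<phi> \<noteq> 0" using assms(21) by simp
    have "\<rho>0 * A = (\<tau>g\<^sup>2 * real r * (\<nu> * E\<psi>) * real n * T) * (real m / real m) * (\<tau>s\<^sup>2 / \<tau>s\<^sup>2) * (E\<phi> / E\<phi>)"
      unfolding A_eq \<rho>0_def by (simp add: mult_ac)
    also have "\<dots> = real n * real r * (\<tau>g\<^sup>2 * (\<nu> * E\<psi>)) * T"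
      using m0 t0 e0 by (simp add: mult_ac)
    finally show ?thesis .
  qed
  have GI: "(\<integral>(Wi, Wg, Wu, Wo, Wot).
        frob_sq n d (proj_rows d P (\<lambda>k a. H k a + F_gate d r \<psi> Wg Wu Wot H k a)) \<partial>M) = PH + \<rho>0 * A"
    using G(4) rA unfolding T_def by simp
  have T0: "0 \<le> T" unfolding T_def by (intro sum_nonneg) auto
  have A0: "0 \<le> A" unfolding A_eq using T0 assms(21) by simp
  have PH0: "0 \<le> PH" unfolding PH_def frob_sq_def by (intro sum_nonneg) auto
  have last1: "PH + \<rho>0 * A = \<rho>bar * (PH + A)"
  proof (cases "PH + A = 0")
    case True
    then have "PH = 0" "A = 0" using A0 PH0 by linarith+
    then show ?thesis by simp
  next
    case False
    then show ?thesis unfolding \<rho>bar_def by simp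
  qed
  have last2: "A > 0 \<and> \<rho>0 < 1 \<longrightarrow> \<rho>bar < 1"
  proof
    assume h: "A > 0 \<and> \<rho>0 < 1"
    then have "\<rho>0 * A < 1 * A" by (intro mult_strict_right_mono) auto
    then have "PH + \<rho>0 * A < PH + A" by simp
    moreover have "0 < PH + A" using h PH0 by simp
    ultimately show "\<rho>bar < 1" unfolding \<rho>bar_def by simp
  qed
  show ?thesis
    apply (intro conjI)
    apply (rule S(1), assumption?)
    apply (rule G(1), assumption?)
    apply (rule S(2), assumption?)
    apply (rule G(2), assumption?)
    apply (rule S(4), assumption?)
    apply (rule G(3), assumption?)
    apply (rule SI)
    apply (rule GI)
    apply (unfold GI SI, rule last1)
    apply (rule last2)
    done
qed

end
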